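(* Assume conditions (C1) and (C2) stated in the context. Then the maps \[ (R^\star,R)\mapsto\mathcal G_{R^\star}(R)\qquad\text{and}\qquad(R^\star,R)\mapsto\mathcal L_{R^\star}(R)-\mathcal L_{R^\star}(R^\star) \] are continuous on $\mathcal F_{\mathcal P}^2$ (with the product topology of $\|\cdot\|_{\infty,\mathrm{supp}(\pi_0)}$).
   Context: $\mathcal X$ is a measurable space with distribution $d_0$; $\mathcal A$ is a separable metric space; $\pi_0:\mathcal X\to\Delta(\mathcal A)$ a Markov kernel, $S_x:=\mathrm{supp}(\pi_0(\cdot\mid x))$ its topological support, $\|f\|_{\infty,\mathrm{supp}(\pi_0)}:=\sup\{|f(x,a)|:x\in\mathcal X,a\in S_x\}$. A fixed measurable tie-breaking rule assigns to each measurable reward $R$ a measurable $a_R$ with $a_R(x)\in\arg\max_{a\in S_x}R(x,a)$. $\mathcal P$ is a set; each $p$ induces a $\pi_0$-centered (i.e. $\int R_p(x,a)\pi_0(da\mid x)=0$ for all $x$) measurable reward $R_p$; $\mathcal F_{\mathcal P}:=\{R_p:p\in\mathcal P\}$. (C1) $\mathcal F_{\mathcal P}$ is compact under $\|\cdot\|_{\infty,\mathrm{supp}(\pi_0)}$, and every $R\in\mathcal F_{\mathcal P}$ has $a\mapsto R(x,a)$ continuous on $S_x$ for $d_0$-a.e. $x$. (C2) There is $\Delta^{\mathcal P}_{\min}>0$ such that for every $p$, $d_0$-a.s., $a_{R_p}(X)$ is the unique maximizer and $R_p(X,a_{R_p}(X))-\sup_{a\in S_X,a\ne a_{R_p}(X)}R_p(X,a)\ge\Delta^{\mathcal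 P}_{\min}$. $K\ge2$; $\mathbf v_R(x,\mathbf a)=(R(x,a_1),\dots,R(x,a_K))$; $P_R(y=k\mid x,\mathbf a)=e^{R(x,a_k)}/\sum_\ell e^{R(x,a_\ell)}$; $\ell(\mathbf v,y)=\log\sum_ke^{v_k}-v_y$. For a truth reward $R^\star\in\mathcal F_{\mathcal P}$: $\mathcal G_{R^\star}(R):=\mathbb E_{X\sim d_0}[R^\star(X,a_{R^\star}(X))-R^\star(X,a_R(X))]$ and $\mathcal L_{R^\star}(R):=\mathbb E[\ell(\mathbf v_R(X,\mathbf A),Y)]$ with $X\sim d_0$, $\mathbf A\sim\pi_0(\cdot\mid X)^{\otimes K}$, $Y\sim P_{R^\star}(\cdot\mid X,\mathbf A)$. *)

theory Defs
  imports "HOL-Probability.Probability"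
begin

definition topo_support :: "'a::topological_space measure \<Rightarrow> 'a set" where
  "topo_support \<mu> = {a. \<forall>U. open U \<longrightarrow> a \<in> U \<longrightarrow> emeasure \<mu> U > 0}"

text \<open>Sup-distance of two rewards on the support S x of the reference policy
  (extended-real valued: the sup-norm of the difference on supp pi0).\<close>
definition supp_dist :: "('x \<Rightarrow> 'a set) \<Rightarrow> ('x \<Rightarrow> 'a \<Rightarrow> real) \<Rightarrow> ('x \<Rightarrow> 'a \<Rightarrow> real) \<Rightarrow> ereal" where
  "supp_dist S R R' = (SUP z \<in> Sigma UNIV S. ereal \<bar>R (fst z) (snd z) - R' (fst z) (snd z)\<bar>)"

definition supp_top :: "('x \<Rightarrow> 'a set) \<Rightarrow> ('x \<Rightarrow> 'a \<Rightarrow> real) topology" where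
  "supp_top S = topology (\<lambda>U. \<forall>R\<in>U. \<exists>e>0. \<forall>R'. supp_dist S R R' < ereal e \<longrightarrow> R' \<in> U)"

definition choice_prob :: "nat \<Rightarrow> (nat \<Rightarrow> real) \<Rightarrow> nat \<Rightarrow> real" where
  "choice_prob K v y = exp (v y) / (\<Sum>l<K. exp (v l))"

definition logloss :: "nat \<Rightarrow> (nat \<Rightarrow> real) \<Rightarrow> nat \<Rightarrow> real" where
  "logloss K v y = ln (\<Sum>k<K. exp (v k)) - v y"

text \<open>Suboptimality gap G_{R*}(R), with a the tie-breaking rule.\<close>
definition gap_G :: "'x measure \<Rightarrow> (('x \<Rightarrow> 'a \<Rightarrow> real) \<Rightarrow> 'x \<Rightarrow> 'a)
     \<Rightarrow> ('x \<Rightarrow> 'a \<Rightarrow> real) \<Rightarrow> ('x \<Rightarrow> 'a \<Rightarrow> real) \<Rightarrow> real" where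
  "gap_G d0 amax Rs R = (\<integral>x. Rs x (amax Rs x) - Rs x (amax R x) \<partial>d0)"

text \<open>Population loss L_{R*}(R): X ~ d0, A ~ pi0(.|X)^K (indices {..<K}),
  Y ~ P_{R*}(.|X,A); the expectation over the finite label Y is written as a sum.\<close>
definition pop_loss :: "'x measure \<Rightarrow> ('x \<Rightarrow> 'a measure) \<Rightarrow> nat
     \<Rightarrow> ('x \<Rightarrow> 'a \<Rightarrow> real) \<Rightarrow> ('x \<Rightarrow> 'a \<Rightarrow> real) \<Rightarrow> real" where
  "pop_loss d0 \<pi>0 K Rs R =
     (\<integral>x. (\<integral>as. (\<Sum>y<K. choice_prob K (\<lambda>k. Rs x (as k)) y * logloss K (\<lambda>k. R x (as k)) y)
            \<partial>(PiM {..<K} (\<lambda>_. \<pi>0 x))) \<partial>d0)"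

end

theory Submission
  imports Defs
begin


lemma supp_dist_lt:
  assumes "supp_dist S R R' < ereal e" "a \<in> S x"
  shows "\<bar>R x a - R' x a\<bar> < e"
proof -
  have "ereal \<bar>R x a - R' x a\<bar> \<le> supp_dist S R R'"
    unfolding supp_dist_def using assms(2) by (intro SUP_upper2[of "(x,a)"]) auto
  then have "ereal \<bar>R x a - R' x a\<bar> < ereal e" using assms(1) by (rule le_less_trans)
  then show ?thesis by simp
qed

lemma supp_dist_MInf:
  assumes "supp_dist S A B = -\<infinity>" shows "supp_dist S C D = -\<infinity>"
proof -
  have "Sigma UNIV S = {}"
  proof (rule ccontr)
    assume "Sigma UNIV S \<noteq> {}"
    then obtain x a where "a \<in> S x" by auto
    then have "ereal \<bar>A x a - B x a\<bar> \<le> supp_dist S A B"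
      unfolding supp_dist_def by (intro SUP_upper2[of "(x,a)"]) auto
    with assms show False by simp
  qed
  then show ?thesis unfolding supp_dist_def by (simp add: bot_ereal_def)
qed

lemma supp_dist_le_iff:
  "supp_dist S R R' \<le> ereal e \<longleftrightarrow> (\<forall>x. \<forall>a\<in>S x. \<bar>R x a - R' x a\<bar> \<le> e)"
  unfolding supp_dist_def by (auto simp: SUP_le_iff)

lemma supp_dist_sym: "supp_dist S R R' = supp_dist S R' R"
  unfolding supp_dist_def by (simp add: abs_minus_commute)

lemma supp_dist_triangle:
  "supp_dist S A C \<le> supp_dist S A B + supp_dist S B C"
proof -
  have "ereal \<bar>A x a - C x a\<bar> \<le> supp_dist S A B + supp_dist S B C" if "a \<in> S x" for x a
  proof -
    have 1: "ereal \<bar>A x a - B x a\<bar> \<le> supp_dist S A B"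
      unfolding supp_dist_def using that by (intro SUP_upper2[of "(x,a)"]) auto
    have 2: "ereal \<bar>B x a - C x a\<bar> \<le> supp_dist S B C"
      unfolding supp_dist_def using that by (intro SUP_upper2[of "(x,a)"]) auto
    have "ereal \<bar>A x a - C x a\<bar> \<le> ereal \<bar>A x a - B x a\<bar> + ereal \<bar>B x a - C x a\<bar>"
      by simp
    also have "\<dots> \<le> supp_dist S A B + supp_dist S B C"
      using 1 2 by (rule add_mono)
    finally show ?thesis .
  qed
  then show ?thesis unfolding supp_dist_def[of S A C] by (auto intro!: SUP_least)
qed

lemma supp_dist_self: "supp_dist S R R \<le> 0"
  unfolding supp_dist_def by (auto intro!: SUP_least)

lemma istopology_supp:
  "istopology (\<lambda>U. \<forall>R\<in>U. \<exists>e>0. \<forall>R'. supp_dist S R R' < ereal e \<longrightarrow> R' \<in> U)"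
  unfolding istopology_def
proof (intro conjI allI impI)
  fix U V
  assume U: "\<forall>R\<in>U. \<exists>e>0. \<forall>R'. supp_dist S R R' < ereal e \<longrightarrow> R' \<in> U"
    and V: "\<forall>R\<in>V. \<exists>e>0. \<forall>R'. supp_dist S R R' < ereal e \<longrightarrow> R' \<in> V"
  show "\<forall>R\<in>U \<inter> V. \<exists>e>0. \<forall>R'. supp_dist S R R' < ereal e \<longrightarrow> R' \<in> U \<inter> V"
  proof
    fix R assume R: "R \<in> U \<inter> V"
    obtain e1 where e1: "e1 > 0" "\<forall>R'. supp_dist S R R' < ereal e1 \<longrightarrow> R' \<in> U"
      using U R by blast
    obtain e2 where e2: "e2 > 0" "\<forall>R'. supp_dist S R R' < ereal e2 \<longrightarrow> R' \<in> V"
      using V R by blast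
    have m: "supp_dist S R R' < ereal e1 \<and> supp_dist S R R' < ereal e2"
      if h: "supp_dist S R R' < ereal (min e1 e2)" for R'
    proof
      have "ereal (min e1 e2) \<le> ereal e1" "ereal (min e1 e2) \<le> ereal e2" by simp_all
      then show "supp_dist S R R' < ereal e1" "supp_dist S R R' < ereal e2"
        using h by (meson order.strict_trans2)+
    qed
    have "min e1 e2 > 0" using e1 e2 by simp
    moreover have "\<forall>R'. supp_dist S R R' < ereal (min e1 e2) \<longrightarrow> R' \<in> U \<inter> V"
      using m e1(2) e2(2) by blast
    ultimately show "\<exists>e>0. \<forall>R'. supp_dist S R R' < ereal e \<longrightarrow> R' \<in> U \<inter> V" by blast
  qed
next
  fix KK
  assume H: "\<forall>U\<in>KK. \<forall>R\<in>U. \<exists>e>0. \<forall>R'. supp_dist S R R' < ereal e \<longrightarrow> R' \<in> U"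
  show "\<forall>R\<in>\<Union>KK. \<exists>e>0. \<forall>R'. supp_dist S R R' < ereal e \<longrightarrow> R' \<in> \<Union>KK"
  proof
    fix R assume "R \<in> \<Union>KK"
    then obtain U where "U \<in> KK" "R \<in> U" by auto
    with H obtain e where "e > 0" "\<forall>R'. supp_dist S R R' < ereal e \<longrightarrow> R' \<in> U" by blast
    with \<open>U \<in> KK\<close> show "\<exists>e>0. \<forall>R'. supp_dist S R R' < ereal e \<longrightarrow> R' \<in> \<Union>KK" by blast
  qed
qed

lemma openin_supp_top:
  "openin (supp_top S) U \<longleftrightarrow> (\<forall>R\<in>U. \<exists>e>0. \<forall>R'. supp_dist S R R' < ereal e \<longrightarrow> R' \<in> U)"
  unfolding supp_top_def by (simp add: topology_inverse'[OF istopology_supp])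

lemma topspace_supp_top: "topspace (supp_top S) = UNIV"
  unfolding topspace_def openin_supp_top
  by (auto intro!: exI[of _ UNIV] exI[of _ 1])

lemma openin_ball_supp:
  "openin (supp_top S) {R'. supp_dist S R0 R' < ereal d}"
  unfolding openin_supp_top
proof (intro ballI)
  fix R assume "R \<in> {R'. supp_dist S R0 R' < ereal d}"
  then have R: "supp_dist S R0 R < ereal d" by simp
  show "\<exists>e>0. \<forall>R'. supp_dist S R R' < ereal e \<longrightarrow> R' \<in> {R'. supp_dist S R0 R' < ereal d}"
  proof (cases "supp_dist S R0 R = -\<infinity>")
    case True
    then show ?thesis using supp_dist_MInf[OF True] by (intro exI[of _ 1]) auto
  next
    case False
  then obtain r where r: "supp_dist S R0 R = ereal r"
    using R by (cases "supp_dist S R0 R") auto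
  with R have "r < d" by auto
  show ?thesis
  proof (intro exI[of _ "d - r"] conjI allI impI)
    show "0 < d - r" using \<open>r < d\<close> by simp
    fix R' assume "supp_dist S R R' < ereal (d - r)"
    have "supp_dist S R0 R' \<le> supp_dist S R0 R + supp_dist S R R'" by (rule supp_dist_triangle)
    also have "\<dots> < ereal r + ereal (d - r)" using r \<open>supp_dist S R R' < ereal (d - r)\<close>
      by (cases "supp_dist S R R'") auto
    finally show "R' \<in> {R'. supp_dist S R0 R' < ereal d}" by simp
  qed
  qed
qed

lemma cont_crit:
  fixes f :: "(('x \<Rightarrow> 'a \<Rightarrow> real) \<times> ('x \<Rightarrow> 'a \<Rightarrow> real)) \<Rightarrow> real"
  assumes "\<And>a0 b0 e. a0 \<in> F \<Longrightarrow> b0 \<in> F \<Longrightarrow> e > 0 \<Longrightarrow> \<exists>d>0. \<forall>a\<in>F. \<forall>b\<in>F.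
      supp_dist S a0 a < ereal d \<longrightarrow> supp_dist S b0 b < ereal d \<longrightarrow> \<bar>f (a,b) - f (a0,b0)\<bar> < e"
  shows "continuous_map (prod_topology (subtopology (supp_top S) F) (subtopology (supp_top S) F)) euclideanreal f"
  unfolding Met_TC.continuous_map_to_metric[simplified mtopology_is_euclidean]
proof (intro ballI allI impI)
  fix z :: "(('x \<Rightarrow> 'a \<Rightarrow> real) \<times> ('x \<Rightarrow> 'a \<Rightarrow> real))" and e :: real
  assume z: "z \<in> topspace (prod_topology (subtopology (supp_top S) F) (subtopology (supp_top S) F))" and e: "e > 0"
  obtain a0 b0 where zz: "z = (a0, b0)" "a0 \<in> F" "b0 \<in> F" using z by (cases z) (auto simp: topspace_supp_top)
  obtain d where d: "d > 0" "\<forall>a\<in>F. \<forall>b\<in>F.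
      supp_dist S a0 a < ereal d \<longrightarrow> supp_dist S b0 b < ereal d \<longrightarrow> \<bar>f (a,b) - f (a0,b0)\<bar> < e"
    using assms[OF zz(2,3) e] by blast
  let ?U = "({R'. supp_dist S a0 R' < ereal d} \<inter> F) \<times> ({R'. supp_dist S b0 R' < ereal d} \<inter> F)"
  show "\<exists>U. openin (prod_topology (subtopology (supp_top S) F) (subtopology (supp_top S) F)) U \<and> z \<in> U \<and>
          (\<forall>y\<in>U. f y \<in> Met_TC.mball (f z) e)"
  proof (intro exI[of _ ?U] conjI)
    show "openin (prod_topology (subtopology (supp_top S) F) (subtopology (supp_top S) F)) ?U"
      unfolding openin_prod_Times_iff
    proof (intro disjI2 conjI)
      show "openin (subtopology (supp_top S) F) ({R'. supp_dist S a0 R' < ereal d} \<inter> F)"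
        unfolding openin_subtopology using openin_ball_supp by blast
      show "openin (subtopology (supp_top S) F) ({R'. supp_dist S b0 R' < ereal d} \<inter> F)"
        unfolding openin_subtopology using openin_ball_supp by blast
    qed
    have "supp_dist S R R < ereal d" for R using supp_dist_self[of S R] d(1)
      by (meson order.strict_trans1 zero_ereal_def ereal_less(2))
    then show "z \<in> ?U" using zz by auto
    show "\<forall>y\<in>?U. f y \<in> Met_TC.mball (f z) e"
    proof
      fix y assume "y \<in> ?U"
      then obtain a b where "y = (a,b)" "a \<in> F" "b \<in> F" "supp_dist S a0 a < ereal d" "supp_dist S b0 b < ereal d"
        by auto
      then have "\<bar>f y - f z\<bar> < e" using d zz by simp
      then show "f y \<in> Met_TC.mball (f z) e" by (simp add: dist_real_def abs_minus_commute)
    qed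
  qed
qed



definition Hf :: "nat \<Rightarrow> (nat \<Rightarrow> real) \<Rightarrow> (nat \<Rightarrow> real) \<Rightarrow> real" where
  "Hf K v w = (\<Sum>y<K. choice_prob K v y * logloss K w y)"

lemma sumexp_pos: assumes "(K::nat) > 0" shows "(\<Sum>l<K. exp (v l)) > (0::real)"
proof -
  have "{..<K} \<noteq> {}" using assms by auto
  then show ?thesis by (intro sum_pos) auto
qed

lemma choice_prob_nonneg: "choice_prob K v y \<ge> 0"
  unfolding choice_prob_def by (intro divide_nonneg_nonneg sum_nonneg) auto

lemma choice_prob_sum: "K > 0 \<Longrightarrow> (\<Sum>y<K. choice_prob K v y) = 1"
  unfolding choice_prob_def using sumexp_pos[of K v] by (simp add: sum_divide_distrib[symmetric])

lemma Hf_alt: "K > 0 \<Longrightarrow> Hf K v w = ln (\<Sum>k<K. exp (w k)) - (\<Sum>y<K. choice_prob K v y * w y)"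
proof -
  assume K: "K > 0"
  have "Hf K v w = (\<Sum>y<K. choice_prob K v y * ln (\<Sum>k<K. exp (w k))) - (\<Sum>y<K. choice_prob K v y * w y)"
    unfolding Hf_def logloss_def by (simp add: right_diff_distrib sum_subtractf)
  also have "(\<Sum>y<K. choice_prob K v y * ln (\<Sum>k<K. exp (w k))) = ln (\<Sum>k<K. exp (w k))"
    using choice_prob_sum[OF K, of v] by (simp add: sum_distrib_right[symmetric])
  finally show ?thesis .
qed

lemma lse_upper:
  fixes w w0 :: "nat \<Rightarrow> real"
  assumes K: "(K::nat) > 0" and h: "\<And>k. k < K \<Longrightarrow> w k \<le> w0 k + d"
  shows "ln (\<Sum>k<K. exp (w k)) \<le> d + ln (\<Sum>k<K. exp (w0 k))"
proof -
  have "(\<Sum>k<K. exp (w k)) \<le> (\<Sum>k<K. exp d * exp (w0 k))"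
  proof (rule sum_mono)
    fix k assume "k \<in> {..<K}"
    then have "w k \<le> d + w0 k" using h[of k] by simp
    then show "exp (w k) \<le> exp d * exp (w0 k)" by (simp flip: exp_add)
  qed
  also have "\<dots> = exp d * (\<Sum>k<K. exp (w0 k))" by (simp add: sum_distrib_left)
  finally have "ln (\<Sum>k<K. exp (w k)) \<le> ln (exp d * (\<Sum>k<K. exp (w0 k)))"
    using sumexp_pos[OF K, of w] by simp
  also have "\<dots> = d + ln (\<Sum>k<K. exp (w0 k))"
    using sumexp_pos[OF K, of w0] by (simp add: ln_mult)
  finally show ?thesis .
qed

lemma lse_lip:
  fixes w w0 :: "nat \<Rightarrow> real"
  assumes K: "(K::nat) > 0" and h: "\<And>k. k < K \<Longrightarrow> \<bar>w k - w0 k\<bar> \<le> d"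
  shows "\<bar>ln (\<Sum>k<K. exp (w k)) - ln (\<Sum>k<K. exp (w0 k))\<bar> \<le> d"
  using lse_upper[OF K, of w w0 d] lse_upper[OF K, of w0 w d] h
  by (force simp: abs_le_iff)

lemma cp_upper:
  assumes K: "(K::nat) > 0" and h: "\<And>k. k < K \<Longrightarrow> v k \<le> v0 k + d" "\<And>k. k < K \<Longrightarrow> v0 k \<le> v k + d"
    and y: "y < K"
  shows "choice_prob K v y \<le> exp (2*d) * choice_prob K v0 y"
proof -
  have "v y \<le> d + v0 y" using h(1)[OF y] by simp
  then have num: "exp (v y) \<le> exp d * exp (v0 y)" by (simp flip: exp_add)
  have "(\<Sum>k<K. exp (v0 k)) \<le> (\<Sum>k<K. exp d * exp (v k))"
  proof (rule sum_mono)
    fix k assume "k \<in> {..<K}"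
    then have "v0 k \<le> d + v k" using h(2)[of k] by simp
    then show "exp (v0 k) \<le> exp d * exp (v k)" by (simp flip: exp_add)
  qed
  also have "\<dots> = exp d * (\<Sum>k<K. exp (v k))" by (simp add: sum_distrib_left)
  finally have den: "exp (-d) * (\<Sum>k<K. exp (v0 k)) \<le> (\<Sum>k<K. exp (v k))"
    by (simp add: exp_minus field_simps)
  have p0: "(\<Sum>k<K. exp (v0 k)) > 0" "(\<Sum>k<K. exp (v k)) > 0" using sumexp_pos[OF K] by auto
  have "choice_prob K v y = exp (v y) / (\<Sum>k<K. exp (v k))" unfolding choice_prob_def ..
  also have "\<dots> \<le> (exp d * exp (v0 y)) / (exp (-d) * (\<Sum>k<K. exp (v0 k)))"
    using num den p0 by (intro frac_le) auto
  also have "\<dots> = exp (2*d) * choice_prob K v0 y"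
    unfolding choice_prob_def by (simp add: exp_minus field_simps flip: exp_add)
  finally show ?thesis .
qed

lemma exp_small: "0 \<le> (t::real) \<Longrightarrow> t \<le> 1/2 \<Longrightarrow> exp t \<le> 1 + 2 * t"
  using exp_bound_lemma[of t] by simp

lemma cp_lip:
  assumes K: "(K::nat) > 0" and h: "\<And>k. k < K \<Longrightarrow> \<bar>v k - v0 k\<bar> \<le> d" and d: "0 \<le> d" "d \<le> 1/4"
    and y: "y < K"
  shows "\<bar>choice_prob K v y - choice_prob K v0 y\<bar> \<le> 4 * d * choice_prob K v0 y"
proof -
  have h1: "v k \<le> v0 k + d" "v0 k \<le> v k + d" if "k < K" for k
    using h[OF that] by (simp_all add: abs_le_iff)
  have u: "choice_prob K v y \<le> exp (2*d) * choice_prob K v0 y"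
    using h1 by (intro cp_upper[OF K _ _ y])
  have l: "choice_prob K v0 y \<le> exp (2*d) * choice_prob K v y"
    using h1 by (intro cp_upper[OF K _ _ y])
  have e: "exp (2*d) \<le> 1 + 4 * d" using exp_small[of "2*d"] d by simp
  have em: "exp (-(2*d)) \<ge> 1 - 2 * d" using exp_ge_add_one_self[of "-(2*d)"] by simp
  have pv: "choice_prob K v y \<ge> exp (-(2*d)) * choice_prob K v0 y"
    using l by (simp add: exp_minus field_simps)
  have c0: "choice_prob K v0 y \<ge> 0" by (rule choice_prob_nonneg)
  have a: "choice_prob K v y - choice_prob K v0 y \<le> 4 * d * choice_prob K v0 y"
    using u e c0 mult_right_mono[OF e c0] by (simp add: algebra_simps)
  have b: "choice_prob K v0 y - choice_prob K v y \<le> 4 * d * choice_prob K v0 y"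
  proof -
    have "(1 - 2*d) * choice_prob K v0 y \<le> exp (-(2*d)) * choice_prob K v0 y"
      using mult_right_mono[OF em c0] .
    with pv have "(1 - 2*d) * choice_prob K v0 y \<le> choice_prob K v y" by linarith
    moreover have "d * (2 * choice_prob K v0 y) \<le> d * (4 * choice_prob K v0 y)"
      using d c0 by (intro mult_left_mono) auto
    ultimately show ?thesis by (simp add: algebra_simps)
  qed
  from a b show ?thesis by (simp add: abs_le_iff)
qed

lemma Hf_lip:
  assumes K: "K > 0" and hv: "\<And>k. k < K \<Longrightarrow> \<bar>v k - v0 k\<bar> \<le> d"
    and hw: "\<And>k. k < K \<Longrightarrow> \<bar>w k - w0 k\<bar> \<le> d"
    and B: "\<And>k. k < K \<Longrightarrow> \<bar>w0 k\<bar> \<le> B"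
    and d: "0 \<le> d" "d \<le> 1/4"
  shows "\<bar>Hf K v w - Hf K v0 w0\<bar> \<le> 2 * d + 4 * d * B"
proof -
  have B0: "B \<ge> 0" using B[of 0] K by linarith
  have l: "\<bar>ln (\<Sum>k<K. exp (w k)) - ln (\<Sum>k<K. exp (w0 k))\<bar> \<le> d" by (rule lse_lip[OF K hw])
  have s1: "\<bar>(\<Sum>y<K. choice_prob K v y * w y) - (\<Sum>y<K. choice_prob K v y * w0 y)\<bar> \<le> d"
  proof -
    have "\<bar>(\<Sum>y<K. choice_prob K v y * w y) - (\<Sum>y<K. choice_prob K v y * w0 y)\<bar>
        = \<bar>\<Sum>y<K. choice_prob K v y * (w y - w0 y)\<bar>" by (simp add: sum_subtractf right_diff_distrib)
    also have "\<dots> \<le> (\<Sum>y<K. \<bar>choice_prob K v y * (w y - w0 y)\<bar>)" by (rule sum_abs)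
    also have "\<dots> \<le> (\<Sum>y<K. choice_prob K v y * d)"
      using hw choice_prob_nonneg by (intro sum_mono) (simp add: abs_mult mult_left_mono)
    also have "\<dots> = d" using choice_prob_sum[OF K, of v] by (simp add: sum_distrib_right[symmetric])
    finally show ?thesis .
  qed
  have s2: "\<bar>(\<Sum>y<K. choice_prob K v y * w0 y) - (\<Sum>y<K. choice_prob K v0 y * w0 y)\<bar> \<le> 4 * d * B"
  proof -
    have "\<bar>(\<Sum>y<K. choice_prob K v y * w0 y) - (\<Sum>y<K. choice_prob K v0 y * w0 y)\<bar>
        = \<bar>\<Sum>y<K. (choice_prob K v y - choice_prob K v0 y) * w0 y\<bar>" by (simp add: sum_subtractf left_diff_distrib)
    also have "\<dots> \<le> (\<Sum>y<K. \<bar>(choice_prob K v y - choice_prob K v0 y) * w0 y\<bar>)" by (rule sum_abs)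
    also have "\<dots> \<le> (\<Sum>y<K. (4 * d * choice_prob K v0 y) * B)"
    proof (intro sum_mono)
      fix y assume "y \<in> {..<K}"
      then have y: "y < K" by simp
      show "\<bar>(choice_prob K v y - choice_prob K v0 y) * w0 y\<bar> \<le> 4 * d * choice_prob K v0 y * B"
        unfolding abs_mult using cp_lip[of K v v0 d y, OF K hv d y] B[OF y] choice_prob_nonneg[of K v0 y] d
        by (intro mult_mono) auto
    qed
    also have "\<dots> = 4 * d * B" using choice_prob_sum[OF K, of v0]
      by (simp add: sum_distrib_right[symmetric] sum_distrib_left[symmetric])
    finally show ?thesis .
  qed
  show ?thesis unfolding Hf_alt[OF K] using l s1 s2 by linarith
qed

lemma Hf_bound:
  assumes K: "K > 0" and B: "\<And>k. k < K \<Longrightarrow> \<bar>w k\<bar> \<le> B"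
  shows "\<bar>Hf K v w\<bar> \<le> 2 * B + ln (real K)"
proof -
  have B0: "B \<ge> 0" using B[of 0] K by linarith
  have up: "ln (\<Sum>k<K. exp (w k)) \<le> B + ln (real K)"
  proof -
    have "ln (\<Sum>k<K. exp (w k)) \<le> B + ln (\<Sum>k<K. exp (0::real))"
      using B by (intro lse_upper[OF K]) (auto simp: abs_le_iff)
    then show ?thesis by simp
  qed
  have lo: "ln (\<Sum>k<K. exp (w k)) \<ge> -B"
  proof -
    have "exp (w 0) \<le> (\<Sum>k<K. exp (w k))"
      using K by (intro member_le_sum) auto
    then have "w 0 \<le> ln (\<Sum>k<K. exp (w k))"
      using sumexp_pos[OF K, of w] by (metis exp_gt_zero ln_exp ln_le_cancel_iff)
    then show ?thesis using B[OF K] by (simp add: abs_le_iff)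
  qed
  have s: "\<bar>\<Sum>y<K. choice_prob K v y * w y\<bar> \<le> B"
  proof -
    have "\<bar>\<Sum>y<K. choice_prob K v y * w y\<bar> \<le> (\<Sum>y<K. \<bar>choice_prob K v y * w y\<bar>)" by (rule sum_abs)
    also have "\<dots> \<le> (\<Sum>y<K. choice_prob K v y * B)"
      using B choice_prob_nonneg by (intro sum_mono) (simp add: abs_mult mult_left_mono)
    also have "\<dots> = B" using choice_prob_sum[OF K, of v] by (simp add: sum_distrib_right[symmetric])
    finally show ?thesis .
  qed
  have lnK: "ln (real K) \<ge> 0" using K by simp
  show ?thesis unfolding Hf_alt[OF K] using up lo s lnK by (simp add: abs_le_iff)
qed



lemma AE_topo_support:
  fixes \<mu> :: "'a::{metric_space, second_countable_topology} measure"
  assumes sets: "sets \<mu> = sets borel"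
  shows "AE a in \<mu>. a \<in> topo_support \<mu>"
proof -
  define FF where "FF = {U::'a set. open U \<and> emeasure \<mu> U = 0}"
  obtain FF' where FF': "FF' \<subseteq> FF" "countable FF'" "\<Union>FF' = \<Union>FF"
    using Lindelof[of FF] unfolding FF_def by blast
  have "(\<Union>U\<in>FF'. U) \<in> null_sets \<mu>"
  proof (rule null_sets_UN'[OF FF'(2)])
    fix U assume "U \<in> FF'"
    then have "open U" "emeasure \<mu> U = 0" using FF' unfolding FF_def by auto
    then show "U \<in> null_sets \<mu>" using sets by (auto simp: null_sets_def)
  qed
  moreover have "{a \<in> space \<mu>. a \<notin> topo_support \<mu>} \<subseteq> (\<Union>U\<in>FF'. U)"
  proof
    fix a assume "a \<in> {a \<in> space \<mu>. a \<notin> topo_support \<mu>}"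
    then obtain U where "open U" "a \<in> U" "\<not> emeasure \<mu> U > 0" unfolding topo_support_def by auto
    then have "U \<in> FF" unfolding FF_def by (simp add: not_gr_zero)
    with \<open>a \<in> U\<close> have "a \<in> \<Union>FF" by auto
    then show "a \<in> (\<Union>U\<in>FF'. U)" using FF'(3) by auto
  qed
  ultimately show ?thesis by (rule AE_I')
qed

lemma kernel_PiM:
  assumes pi: "\<pi> \<in> M \<rightarrow>\<^sub>M prob_algebra N" and I: "finite I"
  shows "(\<lambda>x. PiM I (\<lambda>_. \<pi> x)) \<in> M \<rightarrow>\<^sub>M prob_algebra (PiM I (\<lambda>_. N))"
proof (rule measurable_prob_algebra_generated[where \<Omega> = "\<Pi>\<^sub>E i\<in>I. space N" and G = "prod_algebra I (\<lambda>_. N)"])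
  show "sets (PiM I (\<lambda>_. N)) = sigma_sets (\<Pi>\<^sub>E i\<in>I. space N) (prod_algebra I (\<lambda>_. N))"
    by (rule sets_PiM)
  show "Int_stable (prod_algebra I (\<lambda>_. N))" by (rule Int_stable_prod_algebra)
  show "prod_algebra I (\<lambda>_. N) \<subseteq> Pow (\<Pi>\<^sub>E i\<in>I. space N)" by (rule prod_algebra_sets_into_space)
  have px: "sets (\<pi> x) = sets N \<and> prob_space (\<pi> x)" if "x \<in> space M" for x
    using measurable_space[OF pi that] by (simp add: space_prob_algebra)
  show "prob_space (PiM I (\<lambda>_. \<pi> x))" if "x \<in> space M" for x
    using px[OF that] by (intro prob_space_PiM) auto
  show "sets (PiM I (\<lambda>_. \<pi> x)) = sets (PiM I (\<lambda>_. N))" if "x \<in> space M" for x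
    using px[OF that] by (intro sets_PiM_cong) auto
  fix A assume "A \<in> prod_algebra I (\<lambda>_. N)"
  then obtain E where E: "A = Pi\<^sub>E I E" "E \<in> (\<Pi> i\<in>I. sets N)" by (rule prod_algebraE_all)
  have eq: "emeasure (PiM I (\<lambda>_. \<pi> x)) A = (\<Prod>i\<in>I. emeasure (\<pi> x) (E i))" if "x \<in> space M" for x
  proof -
    interpret product_sigma_finite "\<lambda>_. \<pi> x"
      using px[OF that] unfolding product_sigma_finite_def by (auto intro: prob_space_imp_sigma_finite)
    show ?thesis unfolding E(1) using E(2) px[OF that] by (intro emeasure_PiM I) auto
  qed
  have pi': "\<pi> \<in> M \<rightarrow>\<^sub>M subprob_algebra N" using pi by (rule measurable_prob_algebraD)
  have "(\<lambda>x. \<Prod>i\<in>I. emeasure (\<pi> x) (E i)) \<in> borel_measurable M"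
  proof (rule borel_measurable_prod_ennreal)
    fix i assume "i \<in> I"
    then have "E i \<in> sets N" using E(2) by auto
    then show "(\<lambda>x. emeasure (\<pi> x) (E i)) \<in> borel_measurable M"
      using measurable_compose[OF pi' measurable_emeasure_subprob_algebra] by blast
  qed
  then show "(\<lambda>x. emeasure (PiM I (\<lambda>_. \<pi> x)) A) \<in> borel_measurable M"
    by (rule measurable_cong[THEN iffD2, rotated]) (simp add: eq)
qed

lemma integral_measurable_kernel2:
  fixes f :: "'a \<Rightarrow> 'b \<Rightarrow> real"
  assumes f[measurable]: "(\<lambda>(x, y). f x y) \<in> borel_measurable (M \<Otimes>\<^sub>M N)"
  assumes L[measurable]: "L \<in> measurable M (subprob_algebra N)"
  shows "(\<lambda>x. integral\<^sup>L (L x) (f x)) \<in> borel_measurable M"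
proof -
  note integral_measurable_subprob_algebra[measurable]
  note measurable_distr2[measurable]
  have "(\<lambda>x. integral\<^sup>L (distr (L x) (M \<Otimes>\<^sub>M N) (\<lambda>y. (x, y))) (\<lambda>(x, y). f x y)) \<in> borel_measurable M"
    by measurable
  then show ?thesis
  proof (rule measurable_cong[THEN iffD1, rotated])
    fix x assume x: "x \<in> space M"
    have [measurable]: "(\<lambda>y. (x, y)) \<in> L x \<rightarrow>\<^sub>M M \<Otimes>\<^sub>M N"
      using x subprob_measurableD(3)[OF L x] by simp
    show "integral\<^sup>L (distr (L x) (M \<Otimes>\<^sub>M N) (\<lambda>y. (x, y))) (\<lambda>(x, y). f x y) = integral\<^sup>L (L x) (f x)"
      by (subst integral_distr) auto
  qed
qed



lemma abs_int_le:
  fixes f :: "'b \<Rightarrow> real"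
  assumes M: "prob_space M" and f: "integrable M f" and b: "AE x in M. \<bar>f x\<bar> \<le> c"
  shows "\<bar>integral\<^sup>L M f\<bar> \<le> c"
proof -
  interpret prob_space M by (rule M)
  have "integral\<^sup>L M f \<le> integral\<^sup>L M (\<lambda>_. c)"
    using b by (intro integral_mono_AE f) (auto simp: abs_le_iff)
  moreover have "integral\<^sup>L M (\<lambda>_. - c) \<le> integral\<^sup>L M f"
    using b by (intro integral_mono_AE f) (auto simp: abs_le_iff)
  ultimately show ?thesis by (simp add: abs_le_iff prob_space)
qed

lemma margin_ereal:
  assumes "ereal rr - (SUP a\<in>T. ereal (f a)) \<ge> ereal \<Delta>" "a \<in> T"
  shows "f a \<le> rr - \<Delta>"
proof -
  have le: "ereal (f a) \<le> (SUP a\<in>T. ereal (f a))" using assms(2) by (rule SUP_upper)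
  show ?thesis
  proof (cases "(SUP a\<in>T. ereal (f a))")
    case (real s)
    then show ?thesis using assms(1) le by auto
  next
    case PInf
    then show ?thesis using assms(1) by auto
  next
    case MInf
    then show ?thesis using le by auto
  qed
qed

lemma amax_stable:
  fixes f f0 :: "'a \<Rightarrow> real"
  assumes m: "\<forall>a\<in>T. a \<noteq> a0 \<longrightarrow> f0 a \<le> f0 a0 - \<Delta>" and a0: "a0 \<in> T"
    and c: "\<forall>a\<in>T. \<bar>f a - f0 a\<bar> < \<Delta>/2" and a1: "a1 \<in> T" "\<forall>a\<in>T. f a \<le> f a1"
  shows "a1 = a0"
proof (rule ccontr)
  assume "a1 \<noteq> a0"
  then have "f0 a1 \<le> f0 a0 - \<Delta>" using m a1 by auto
  moreover have "f a0 \<le> f a1" using a1 a0 by auto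
  moreover have "\<bar>f a1 - f0 a1\<bar> < \<Delta>/2" "\<bar>f a0 - f0 a0\<bar> < \<Delta>/2" using c a0 a1 by auto
  then have "f a1 - f0 a1 < \<Delta>/2" "f0 a0 - f a0 < \<Delta>/2"
    using abs_less_iff[THEN iffD1] by fastforce+
  ultimately show False by linarith
qed



lemma pop_loss_Hf: "pop_loss d0 \<pi>0 K R1 R2 =
   (\<integral>x. (\<integral>as. Hf K (\<lambda>k. R1 x (as k)) (\<lambda>k. R2 x (as k)) \<partial>(PiM {..<K} (\<lambda>_. \<pi>0 x))) \<partial>d0)"
  unfolding pop_loss_def Hf_def ..

lemma Hf_measurable:
  fixes R1 R2 :: "'x \<Rightarrow> 'a::{metric_space, second_countable_topology} \<Rightarrow> real"
  assumes m1: "(\<lambda>(x, a). R1 x a) \<in> borel_measurable (M \<Otimes>\<^sub>M borel)"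
    and m2: "(\<lambda>(x, a). R2 x a) \<in> borel_measurable (M \<Otimes>\<^sub>M borel)"
  shows "(\<lambda>(x, as). Hf K (\<lambda>k. R1 x (as k)) (\<lambda>k. R2 x (as k)))
          \<in> borel_measurable (M \<Otimes>\<^sub>M PiM {..<K} (\<lambda>_. (borel :: 'a measure)))"
proof -
  have c: "(\<lambda>(x, as). (x, as k)) \<in> (M \<Otimes>\<^sub>M PiM {..<K} (\<lambda>_. (borel :: 'a measure))) \<rightarrow>\<^sub>M (M \<Otimes>\<^sub>M borel)"
    if "k \<in> {..<K}" for k
    using that by measurable
  have [measurable]: "(\<lambda>z. R1 (fst z) (snd z k)) \<in> borel_measurable (M \<Otimes>\<^sub>M PiM {..<K} (\<lambda>_. (borel :: 'a measure)))"
    if "k \<in> {..<K}" for k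
    using measurable_compose[OF c[OF that] m1] by (simp add: case_prod_beta)
  have [measurable]: "(\<lambda>z. R2 (fst z) (snd z k)) \<in> borel_measurable (M \<Otimes>\<^sub>M PiM {..<K} (\<lambda>_. (borel :: 'a measure)))"
    if "k \<in> {..<K}" for k
    using measurable_compose[OF c[OF that] m2] by (simp add: case_prod_beta)
  show ?thesis
    unfolding Hf_def choice_prob_def logloss_def case_prod_beta by measurable
qed



lemma pop_lip:
  fixes d0 :: "'x measure" and \<pi>0 :: "'x \<Rightarrow> 'a::{metric_space, second_countable_topology} measure"
  assumes d0: "prob_space d0" and kernel: "\<pi>0 \<in> d0 \<rightarrow>\<^sub>M prob_algebra borel" and K: "K > 0"
    and m: "\<And>R. R \<in> {Ra,Rb,Qa,Qb} \<Longrightarrow> (\<lambda>(x,a). R x a) \<in> borel_measurable (d0 \<Otimes>\<^sub>M borel)"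
    and B: "\<And>R x a. R \<in> {Ra,Rb,Qa,Qb} \<Longrightarrow> a \<in> topo_support (\<pi>0 x) \<Longrightarrow> \<bar>R x a\<bar> \<le> B"
    and c1: "\<And>x a. a \<in> topo_support (\<pi>0 x) \<Longrightarrow> \<bar>Ra x a - Qa x a\<bar> \<le> \<delta>"
    and c2: "\<And>x a. a \<in> topo_support (\<pi>0 x) \<Longrightarrow> \<bar>Rb x a - Qb x a\<bar> \<le> \<delta>"
    and dl: "0 \<le> \<delta>" "\<delta> \<le> 1/4"
  shows "\<bar>pop_loss d0 \<pi>0 K Ra Rb - pop_loss d0 \<pi>0 K Qa Qb\<bar> \<le> 2*\<delta> + 4*\<delta>*B"
proof -
  interpret prob_space d0 by (rule d0)
  define N where "N = (\<lambda>x. PiM {..<K} (\<lambda>_. \<pi>0 x))"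
  have Nk: "N \<in> d0 \<rightarrow>\<^sub>M prob_algebra (PiM {..<K} (\<lambda>_. borel))"
    unfolding N_def by (rule kernel_PiM[OF kernel]) simp
  have Nk': "N \<in> d0 \<rightarrow>\<^sub>M subprob_algebra (PiM {..<K} (\<lambda>_. borel))"
    using Nk by (rule measurable_prob_algebraD)
  have px: "sets (\<pi>0 x) = sets borel \<and> prob_space (\<pi>0 x)" if "x \<in> space d0" for x
    using measurable_space[OF kernel that] by (simp add: space_prob_algebra)
  have Np: "prob_space (N x)" if "x \<in> space d0" for x
    unfolding N_def using px[OF that] by (intro prob_space_PiM) auto
  have Nsets: "sets (N x) = sets (PiM {..<K} (\<lambda>_. (borel :: 'a measure)))" if "x \<in> space d0" for x
    unfolding N_def using px[OF that] by (intro sets_PiM_cong) auto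
  have AEs: "AE as in N x. \<forall>k\<in>{..<K}. as k \<in> topo_support (\<pi>0 x)" if x: "x \<in> space d0" for x
  proof (rule AE_finite_allI)
    fix k assume k: "k \<in> {..<K}"
    have "AE a in \<pi>0 x. a \<in> topo_support (\<pi>0 x)"
      using px[OF x] by (intro AE_topo_support) auto
    then show "AE as in N x. as k \<in> topo_support (\<pi>0 x)"
      unfolding N_def using px[OF x] k by (intro AE_PiM_component) auto
  qed simp
  define h where "h R R' = (\<lambda>(x, as). Hf K (\<lambda>k. R x (as k)) (\<lambda>k. R' x (as k)))" for R R' :: "'x \<Rightarrow> 'a \<Rightarrow> real"
  have hm: "h R R' \<in> borel_measurable (d0 \<Otimes>\<^sub>M PiM {..<K} (\<lambda>_. (borel :: 'a measure)))"
    if "R \<in> {Ra,Rb,Qa,Qb}" "R' \<in> {Ra,Rb,Qa,Qb}" for R R'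
    unfolding h_def by (rule Hf_measurable[OF m[OF that(1)] m[OF that(2)]])
  have hmx: "(\<lambda>as. h R R' (x, as)) \<in> borel_measurable (N x)"
    if "R \<in> {Ra,Rb,Qa,Qb}" "R' \<in> {Ra,Rb,Qa,Qb}" "x \<in> space d0" for R R' x
    using measurable_Pair2[OF hm[OF that(1,2)] that(3)] Nsets[OF that(3)]
    by (simp cong: measurable_cong_sets)
  define g where "g R R' x = (\<integral>as. h R R' (x, as) \<partial>N x)" for R R' x
  have gm: "g R R' \<in> borel_measurable d0"
    if "R \<in> {Ra,Rb,Qa,Qb}" "R' \<in> {Ra,Rb,Qa,Qb}" for R R'
  proof -
    have "(\<lambda>(x, y). h R R' (x, y)) \<in> borel_measurable (d0 \<Otimes>\<^sub>M PiM {..<K} (\<lambda>_. (borel :: 'a measure)))"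
      using hm[OF that] by simp
    then show ?thesis unfolding g_def by (rule integral_measurable_kernel2[OF _ Nk'])
  qed
  have hbound: "AE as in N x. \<bar>h R R' (x, as)\<bar> \<le> 2 * B + ln (real K)"
    if "R' \<in> {Ra,Rb,Qa,Qb}" "x \<in> space d0" for R R' x
    using AEs[OF that(2)]
  proof (rule AE_mp, intro AE_I2 impI)
    fix as assume "\<forall>k\<in>{..<K}. as k \<in> topo_support (\<pi>0 x)"
    then have "\<And>k. k < K \<Longrightarrow> \<bar>R' x (as k)\<bar> \<le> B" using B[OF that(1)] by auto
    then show "\<bar>h R R' (x, as)\<bar> \<le> 2 * B + ln (real K)"
      unfolding h_def by (simp add: Hf_bound[OF K])
  qed
  have hint: "integrable (N x) (\<lambda>as. h R R' (x, as))"
    if "R \<in> {Ra,Rb,Qa,Qb}" "R' \<in> {Ra,Rb,Qa,Qb}" "x \<in> space d0" for R R' x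
  proof -
    interpret Nx: prob_space "N x" by (rule Np[OF that(3)])
    show ?thesis
      using hbound[OF that(2,3), of R] hmx[OF that]
      by (intro Nx.integrable_const_bound[where B="2 * B + ln (real K)"]) auto
  qed
  have gbound: "\<bar>g R R' x\<bar> \<le> 2 * B + ln (real K)"
    if "R \<in> {Ra,Rb,Qa,Qb}" "R' \<in> {Ra,Rb,Qa,Qb}" "x \<in> space d0" for R R' x
    unfolding g_def by (rule abs_int_le[OF Np[OF that(3)] hint[OF that] hbound[OF that(2,3)]])
  have gint: "integrable d0 (g R R')"
    if "R \<in> {Ra,Rb,Qa,Qb}" "R' \<in> {Ra,Rb,Qa,Qb}" for R R'
    using gbound[OF that] gm[OF that]
    by (intro integrable_const_bound[where B="2 * B + ln (real K)"]) auto
  have in1: "Ra \<in> {Ra,Rb,Qa,Qb}" "Rb \<in> {Ra,Rb,Qa,Qb}" "Qa \<in> {Ra,Rb,Qa,Qb}" "Qb \<in> {Ra,Rb,Qa,Qb}" by auto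
  have gdiff: "\<bar>g Ra Rb x - g Qa Qb x\<bar> \<le> 2*\<delta> + 4*\<delta>*B" if x: "x \<in> space d0" for x
  proof -
    have "g Ra Rb x - g Qa Qb x = (\<integral>as. h Ra Rb (x, as) - h Qa Qb (x, as) \<partial>N x)"
      unfolding g_def using hint[OF in1(1,2) x] hint[OF in1(3,4) x] by simp
    also have "\<bar>\<dots>\<bar> \<le> 2*\<delta> + 4*\<delta>*B"
    proof (rule abs_int_le[OF Np[OF x]])
      show "integrable (N x) (\<lambda>as. h Ra Rb (x, as) - h Qa Qb (x, as))"
        using hint[OF in1(1,2) x] hint[OF in1(3,4) x] by simp
      show "AE as in N x. \<bar>h Ra Rb (x, as) - h Qa Qb (x, as)\<bar> \<le> 2*\<delta> + 4*\<delta>*B"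
        using AEs[OF x]
      proof (rule AE_mp, intro AE_I2 impI)
        fix as assume as: "\<forall>k\<in>{..<K}. as k \<in> topo_support (\<pi>0 x)"
        show "\<bar>h Ra Rb (x, as) - h Qa Qb (x, as)\<bar> \<le> 2*\<delta> + 4*\<delta>*B"
          unfolding h_def split
          by (rule Hf_lip[OF K _ _ _ dl]) (use as c1 c2 B[OF in1(4)] in auto)
      qed
    qed
    finally show ?thesis .
  qed
  have "pop_loss d0 \<pi>0 K Ra Rb - pop_loss d0 \<pi>0 K Qa Qb = (\<integral>x. g Ra Rb x - g Qa Qb x \<partial>d0)"
    unfolding pop_loss_Hf g_def h_def N_def using gint[OF in1(1,2)] gint[OF in1(3,4)]
    unfolding g_def h_def N_def by simp
  also have "\<bar>\<dots>\<bar> \<le> 2*\<delta> + 4*\<delta>*B"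
    using gint[OF in1(1,2)] gint[OF in1(3,4)] gdiff
    by (intro abs_int_le[OF d0]) auto
  finally show ?thesis .
qed



theorem lemma13:
  fixes d0 :: "'x measure"
    and \<pi>0 :: "'x \<Rightarrow> ('a::{metric_space, second_countable_topology}) measure"
    and amax :: "('x \<Rightarrow> 'a \<Rightarrow> real) \<Rightarrow> 'x \<Rightarrow> 'a"
    and P :: "'p set"
    and Rp :: "'p \<Rightarrow> ('x \<Rightarrow> 'a \<Rightarrow> real)"
    and K :: nat
    and \<Delta>min :: real
  defines "S \<equiv> (\<lambda>x. topo_support (\<pi>0 x))"
  defines "F \<equiv> Rp ` P"
  assumes d0: "prob_space d0"
    and kernel: "\<pi>0 \<in> d0 \<rightarrow>\<^sub>M prob_algebra (borel :: 'a measure)"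
    and meas: "\<And>p. p \<in> P \<Longrightarrow> (\<lambda>(x, a). Rp p x a) \<in> borel_measurable (d0 \<Otimes>\<^sub>M borel)"
    and centered: "\<And>p x. p \<in> P \<Longrightarrow> (\<integral>a. Rp p x a \<partial>(\<pi>0 x)) = 0"
    and bounded: "\<And>R. R \<in> F \<Longrightarrow> supp_dist S R (\<lambda>_ _. 0) < \<infinity>"
    and tb_meas: "\<And>R. R \<in> F \<Longrightarrow> amax R \<in> d0 \<rightarrow>\<^sub>M (borel :: 'a measure)"
    and tb_argmax: "\<And>R x. R \<in> F \<Longrightarrow> amax R x \<in> S x \<and> (\<forall>a\<in>S x. R x a \<le> R x (amax R x))"
    and C1_compact: "compactin (supp_top S) F"
    and C1_cont: "\<And>R. R \<in> F \<Longrightarrow> (AE x in d0. continuous_on (S x) (R x))"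
    and C2_pos: "\<Delta>min > 0"
    and C2: "\<And>p. p \<in> P \<Longrightarrow> (AE x in d0.
              (\<forall>a\<in>S x. a \<noteq> amax (Rp p) x \<longrightarrow> Rp p x a < Rp p x (amax (Rp p) x)) \<and>
              ereal (Rp p x (amax (Rp p) x)) - (SUP a \<in> S x - {amax (Rp p) x}. ereal (Rp p x a))
                \<ge> ereal \<Delta>min)"
    and K: "K \<ge> 2"
  shows "continuous_map (prod_topology (subtopology (supp_top S) F) (subtopology (supp_top S) F))
           euclideanreal (\<lambda>(Rs, R). gap_G d0 amax Rs R) \<and>
         continuous_map (prod_topology (subtopology (supp_top S) F) (subtopology (supp_top S) F))
           euclideanreal (\<lambda>(Rs, R). pop_loss d0 \<pi>0 K Rs R - pop_loss d0 \<pi>0 K Rs Rs)"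
proof -
  interpret prob_space d0 by (rule d0)
  have K0: "K > 0" using K by simp
  have Fm: "(\<lambda>(x,a). R x a) \<in> borel_measurable (d0 \<Otimes>\<^sub>M borel)" if "R \<in> F" for R
    using that meas unfolding F_def by auto
  have Fb: "\<exists>B\<ge>0. \<forall>x. \<forall>a\<in>S x. \<bar>R x a\<bar> \<le> B" if "R \<in> F" for R
  proof -
    have lt: "supp_dist S R (\<lambda>_ _. 0) < \<infinity>" by (rule bounded[OF that])
    obtain r where r: "supp_dist S R (\<lambda>_ _. 0) \<le> ereal r"
    proof (cases "supp_dist S R (\<lambda>_ _. 0)")
      case (real r) then show ?thesis using that by auto
    next
      case PInf then show ?thesis using lt by auto
    next
      case MInf then show ?thesis using that[of 0] by auto
    qed
    then have "\<forall>x. \<forall>a\<in>S x. \<bar>R x a\<bar> \<le> max r 0"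
      unfolding supp_dist_le_iff by fastforce
    then show ?thesis by (intro exI[of _ "max r 0"]) auto
  qed
  have close: "\<bar>R x a - R0 x a\<bar> < d" if "supp_dist S R0 R < ereal d" "a \<in> S x" for R0 R d x a
    using supp_dist_lt[OF that] by (simp add: abs_minus_commute)
  have amaxAE: "AE x in d0. amax R x = amax R0 x"
    if R0: "R0 \<in> F" and R: "R \<in> F" and dR: "supp_dist S R0 R < ereal (\<Delta>min/2)" for R0 R
  proof -
    obtain p where p: "p \<in> P" "R0 = Rp p" using R0 unfolding F_def by auto
    show ?thesis
      using C2[OF p(1)]
    proof (rule AE_mp, intro AE_I2 impI)
      fix x assume H: "(\<forall>a\<in>S x. a \<noteq> amax (Rp p) x \<longrightarrow> Rp p x a < Rp p x (amax (Rp p) x)) \<and>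
              ereal (Rp p x (amax (Rp p) x)) - (SUP a \<in> S x - {amax (Rp p) x}. ereal (Rp p x a))
                \<ge> ereal \<Delta>min"
      have m: "\<forall>a\<in>S x. a \<noteq> amax R0 x \<longrightarrow> R0 x a \<le> R0 x (amax R0 x) - \<Delta>min"
        using H margin_ereal[where rr="R0 x (amax R0 x)" and f="R0 x" and T="S x - {amax R0 x}" and \<Delta>=\<Delta>min] p(2) by auto
      show "amax R x = amax R0 x"
      proof (rule amax_stable[OF m])
        show "amax R0 x \<in> S x" using tb_argmax[OF R0] by blast
        show "\<forall>a\<in>S x. \<bar>R x a - R0 x a\<bar> < \<Delta>min / 2" using close[OF dR] by blast
        show "amax R x \<in> S x" "\<forall>a\<in>S x. R x a \<le> R x (amax R x)" using tb_argmax[OF R] by blast+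
      qed
    qed
  qed
  have compm: "(\<lambda>x. Q x (amax U x)) \<in> borel_measurable d0" if "Q \<in> F" "U \<in> F" for Q U
  proof -
    have "(\<lambda>x. (x, amax U x)) \<in> d0 \<rightarrow>\<^sub>M d0 \<Otimes>\<^sub>M borel"
      by (intro measurable_Pair measurable_ident_sets tb_meas[OF that(2)] refl)
    from measurable_compose[OF this Fm[OF that(1)]] show ?thesis by simp
  qed
  have compi: "integrable d0 (\<lambda>x. Q x (amax U x))" if QU: "Q \<in> F" "U \<in> F" for Q U
  proof -
    obtain B where B: "\<forall>x. \<forall>a\<in>S x. \<bar>Q x a\<bar> \<le> B" using Fb[OF QU(1)] by auto
    have "\<bar>Q x (amax U x)\<bar> \<le> B" for x using B tb_argmax[OF QU(2), of x] by blast
    then show ?thesis using compm[OF QU]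
      by (intro integrable_const_bound[where B=B]) auto
  qed
  have gap: "continuous_map (prod_topology (subtopology (supp_top S) F) (subtopology (supp_top S) F))
           euclideanreal (\<lambda>(Rs, R). gap_G d0 amax Rs R)"
  proof (rule cont_crit)
    fix Rs0 R0 e assume Rs0: "Rs0 \<in> F" and R0: "R0 \<in> F" and e: "(e::real) > 0"
    define d where "d = min (\<Delta>min/2) (e/3)"
    have d: "d > 0" "d \<le> \<Delta>min/2" "d \<le> e/3" unfolding d_def using e C2_pos by auto
    show "\<exists>d>0. \<forall>a\<in>F. \<forall>b\<in>F. supp_dist S Rs0 a < ereal d \<longrightarrow> supp_dist S R0 b < ereal d \<longrightarrow>
           \<bar>(case (a, b) of (Rs, R) \<Rightarrow> gap_G d0 amax Rs R) - (case (Rs0, R0) of (Rs, R) \<Rightarrow> gap_G d0 amax Rs R)\<bar> < e"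
    proof (intro exI[of _ d] conjI ballI impI, fact d(1), unfold prod.case)
      fix Rs R assume Rs: "Rs \<in> F" and R: "R \<in> F"
        and dRs: "supp_dist S Rs0 Rs < ereal d" and dR: "supp_dist S R0 R < ereal d"
      have "ereal d \<le> ereal (\<Delta>min/2)" using d by simp
      then have dRs': "supp_dist S Rs0 Rs < ereal (\<Delta>min/2)" and dR': "supp_dist S R0 R < ereal (\<Delta>min/2)"
        using dRs dR by (meson order.strict_trans2)+
      have ae1: "AE x in d0. amax Rs x = amax Rs0 x" by (rule amaxAE[OF Rs0 Rs dRs'])
      have ae2: "AE x in d0. amax R x = amax R0 x" by (rule amaxAE[OF R0 R dR'])
      have "gap_G d0 amax Rs R = (\<integral>x. Rs x (amax Rs0 x) - Rs x (amax R0 x) \<partial>d0)"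
        unfolding gap_G_def
        using compm[OF Rs Rs] compm[OF Rs R] compm[OF Rs Rs0] compm[OF Rs R0] ae1 ae2
        by (intro integral_cong_AE) auto
      then have "gap_G d0 amax Rs R - gap_G d0 amax Rs0 R0 =
          (\<integral>x. (Rs x (amax Rs0 x) - Rs x (amax R0 x)) - (Rs0 x (amax Rs0 x) - Rs0 x (amax R0 x)) \<partial>d0)"
        unfolding gap_G_def
        using compi[OF Rs Rs0] compi[OF Rs R0] compi[OF Rs0 Rs0] compi[OF Rs0 R0] by simp
      also have "\<bar>\<dots>\<bar> \<le> 2 * (e/3)"
      proof (rule abs_int_le[OF d0])
        show "integrable d0 (\<lambda>x. (Rs x (amax Rs0 x) - Rs x (amax R0 x)) - (Rs0 x (amax Rs0 x) - Rs0 x (amax R0 x)))"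
          using compi[OF Rs Rs0] compi[OF Rs R0] compi[OF Rs0 Rs0] compi[OF Rs0 R0] by simp
        show "AE x in d0. \<bar>(Rs x (amax Rs0 x) - Rs x (amax R0 x)) - (Rs0 x (amax Rs0 x) - Rs0 x (amax R0 x))\<bar> \<le> 2 * (e/3)"
        proof (intro AE_I2)
          fix x
          have "\<bar>Rs x (amax Rs0 x) - Rs0 x (amax Rs0 x)\<bar> < d" "\<bar>Rs x (amax R0 x) - Rs0 x (amax R0 x)\<bar> < d"
            using close[OF dRs] tb_argmax[OF Rs0, of x] tb_argmax[OF R0, of x] by auto
          then show "\<bar>(Rs x (amax Rs0 x) - Rs x (amax R0 x)) - (Rs0 x (amax Rs0 x) - Rs0 x (amax R0 x))\<bar> \<le> 2 * (e/3)"
            using d unfolding abs_le_iff abs_less_iff by (intro conjI; elim conjE; linarith)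
        qed
      qed
      finally show "\<bar>gap_G d0 amax Rs R - gap_G d0 amax Rs0 R0\<bar> < e" using e by simp
    qed
  qed
  have pop: "continuous_map (prod_topology (subtopology (supp_top S) F) (subtopology (supp_top S) F))
           euclideanreal (\<lambda>(Rs, R). pop_loss d0 \<pi>0 K Rs R - pop_loss d0 \<pi>0 K Rs Rs)"
  proof (rule cont_crit)
    fix Rs0 R0 e assume Rs0: "Rs0 \<in> F" and R0: "R0 \<in> F" and e: "(e::real) > 0"
    obtain B1 where B1: "B1 \<ge> 0" "\<forall>x. \<forall>a\<in>S x. \<bar>Rs0 x a\<bar> \<le> B1" using Fb[OF Rs0] by auto
    obtain B2 where B2: "B2 \<ge> 0" "\<forall>x. \<forall>a\<in>S x. \<bar>R0 x a\<bar> \<le> B2" using Fb[OF R0] by auto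
    define B where "B = max B1 B2 + 1"
    define C where "C = 2 + 4 * B"
    have C: "C > 0" unfolding C_def B_def using B1 B2 by simp
    define d where "d = min (1/4) (e / (4 * C))"
    have d: "d > 0" "d \<le> 1/4" "d \<le> e / (4 * C)" unfolding d_def using e C by auto
    have dC: "2 * (2 * d + 4 * d * B) < e"
    proof -
      have "2 * (2 * d + 4 * d * B) = 2 * d * C" unfolding C_def by (simp add: algebra_simps)
      also have "\<dots> \<le> 2 * (e / (4 * C)) * C" using d C by (intro mult_right_mono) auto
      also have "\<dots> = e / 2" using C by (simp add: field_simps)
      finally show ?thesis using e by simp
    qed
    show "\<exists>d>0. \<forall>a\<in>F. \<forall>b\<in>F. supp_dist S Rs0 a < ereal d \<longrightarrow> supp_dist S R0 b < ereal d \<longrightarrow>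
           \<bar>(case (a, b) of (Rs, R) \<Rightarrow> pop_loss d0 \<pi>0 K Rs R - pop_loss d0 \<pi>0 K Rs Rs) -
            (case (Rs0, R0) of (Rs, R) \<Rightarrow> pop_loss d0 \<pi>0 K Rs R - pop_loss d0 \<pi>0 K Rs Rs)\<bar> < e"
    proof (intro exI[of _ d] conjI ballI impI, fact d(1), unfold prod.case)
      fix Rs R assume Rs: "Rs \<in> F" and R: "R \<in> F"
        and dRs: "supp_dist S Rs0 Rs < ereal d" and dR: "supp_dist S R0 R < ereal d"
      have c1: "\<bar>Rs x a - Rs0 x a\<bar> \<le> d" if "a \<in> topo_support (\<pi>0 x)" for x a
        using close[OF dRs, of a x] that unfolding S_def by auto
      have c2: "\<bar>R x a - R0 x a\<bar> \<le> d" if "a \<in> topo_support (\<pi>0 x)" for x a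
        using close[OF dR, of a x] that unfolding S_def by auto
      have bd: "\<bar>Q x a\<bar> \<le> B" if "Q \<in> {Rs, R, Rs0, R0}" "a \<in> topo_support (\<pi>0 x)" for Q x a
      proof -
        have a: "a \<in> S x" using that(2) unfolding S_def by simp
        have "\<bar>Rs0 x a\<bar> \<le> B1" "\<bar>R0 x a\<bar> \<le> B2" using B1 B2 a by auto
        moreover have "\<bar>Rs x a - Rs0 x a\<bar> \<le> d" "\<bar>R x a - R0 x a\<bar> \<le> d" using c1 c2 that(2) by auto
        ultimately show ?thesis using that(1) d(2) unfolding B_def by (auto simp: abs_le_iff)
      qed
      have mm: "\<And>Q. Q \<in> {Rs, R, Rs0, R0} \<Longrightarrow> (\<lambda>(x,a). Q x a) \<in> borel_measurable (d0 \<Otimes>\<^sub>M borel)"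
        using Fm Rs R Rs0 R0 by auto
      have L1: "\<bar>pop_loss d0 \<pi>0 K Rs R - pop_loss d0 \<pi>0 K Rs0 R0\<bar> \<le> 2*d + 4*d*B"
        using d by (intro pop_lip[where Ra=Rs and Rb=R and Qa=Rs0 and Qb=R0 and \<delta>=d and B=B] d0 kernel K0 mm bd c1 c2) auto
      have mm2: "\<And>Q. Q \<in> {Rs, Rs, Rs0, Rs0} \<Longrightarrow> (\<lambda>(x,a). Q x a) \<in> borel_measurable (d0 \<Otimes>\<^sub>M borel)"
        using Fm Rs Rs0 by auto
      have bd2: "\<bar>Q x a\<bar> \<le> B" if "Q \<in> {Rs, Rs, Rs0, Rs0}" "a \<in> topo_support (\<pi>0 x)" for Q x a
        using bd[of Q a x] that by auto
      have L2: "\<bar>pop_loss d0 \<pi>0 K Rs Rs - pop_loss d0 \<pi>0 K Rs0 Rs0\<bar> \<le> 2*d + 4*d*B"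
        using d by (intro pop_lip[where Ra=Rs and Rb=Rs and Qa=Rs0 and Qb=Rs0 and \<delta>=d and B=B] d0 kernel K0 mm2 bd2 c1) auto
      show "\<bar>pop_loss d0 \<pi>0 K Rs R - pop_loss d0 \<pi>0 K Rs Rs - (pop_loss d0 \<pi>0 K Rs0 R0 - pop_loss d0 \<pi>0 K Rs0 Rs0)\<bar> < e"
        using L1 L2 dC by (simp add: abs_le_iff abs_less_iff)
    qed
  qed
  show ?thesis using gap pop by blast
qed


end
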